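(* Let $p$ be an odd prime, $n\geq 2$, $1\leq s\leq p-1$, and $t$ an integer with $sp^{n-2}\leq t\leq p^{n-1}-1$. Then $\frac{(sp^{n-2})!}{t!}{t \brace sp^{n-2}}_{\leq p-1}\in\mathbb{Z}_{(p)}$ and \[\frac{(sp^{n-2})!}{t!}{t \brace sp^{n-2}}_{\leq p-1}\equiv \begin{cases}0 \pmod p, & \text{if } p^{n-2}\nmid t,\\ \frac{s!}{(t/p^{n-2})!}{t/p^{n-2} \brace s}\pmod p, & \text{if } p^{n-2}\mid t.\end{cases}\]
   Context: ${N \brace k}$ denotes the Stirling number of the second kind (number of partitions of an $N$-set into $k$ nonempty blocks). For $r\ge1$, the restricted Stirling number ${N \brace k}_{\leq r}$ is $\sum \frac{N!}{\prod_{m=1}^r j_m!(m!)^{j_m}}$ over $(j_1,\dots,j_r)\in\mathbb{N}^r$ with $\sum j_m=k$, $\sum m j_m=N$ (number of partitions of an $N$-set into $k$ nonempty blocks of size at most $r$). Congruences are in $\mathbb{Z}_{(p)}$. *)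

theory Defs
  imports Complex_Main "HOL-Combinatorics.Stirling" "HOL-Computational_Algebra.Primes"
begin

definition restricted_stirling :: "nat \<Rightarrow> nat \<Rightarrow> nat \<Rightarrow> rat" where
  "restricted_stirling r N k =
     (\<Sum>j\<in>{j :: nat \<Rightarrow> nat. (\<forall>m. m \<notin> {1..r} \<longrightarrow> j m = 0)
              \<and> (\<Sum>m=1..r. j m) = k \<and> (\<Sum>m=1..r. m * j m) = N}.
        fact N / (\<Prod>m=1..r. fact (j m) * fact m ^ j m))"

definition in_Zp :: "nat \<Rightarrow> rat \<Rightarrow> bool" where
  "in_Zp p x \<longleftrightarrow> (\<exists>a b :: int. \<not> int p dvd b \<and> x = of_int a / of_int b)"

definition cong_Zp :: "nat \<Rightarrow> rat \<Rightarrow> rat \<Rightarrow> bool" where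
  "cong_Zp p x y \<longleftrightarrow> in_Zp p x \<and> in_Zp p y \<and> in_Zp p ((x - y) / of_nat p)"

end

theory Submission
  imports Defs "HOL-Number_Theory.Number_Theory"
begin


lemma Zp_int: "prime p \<Longrightarrow> in_Zp p (of_int a)"
  unfolding in_Zp_def
  apply (rule exI[of _ a], rule exI[of _ 1])
  by (cases "p = 1") auto

lemma Zp_add:
  assumes "prime p" "in_Zp p x" "in_Zp p y" shows "in_Zp p (x + y)"
proof -
  obtain a b c d where h: "\<not> int p dvd b" "x = of_int a / of_int b" "\<not> int p dvd d" "y = of_int c / of_int d"
    using assms unfolding in_Zp_def by blast
  have "b \<noteq> 0" "d \<noteq> 0" using h by auto
  have "\<not> int p dvd b * d" using h assms(1)
    by (simp add: prime_dvd_mult_iff prime_nat_int_transfer)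
  moreover have "x + y = of_int (a*d + c*b) / of_int (b*d)"
    using h `b \<noteq> 0` `d \<noteq> 0` by (simp add: field_simps)
  ultimately show ?thesis unfolding in_Zp_def by blast
qed

lemma Zp_mult:
  assumes "prime p" "in_Zp p x" "in_Zp p y" shows "in_Zp p (x * y)"
proof -
  obtain a b c d where h: "\<not> int p dvd b" "x = of_int a / of_int b" "\<not> int p dvd d" "y = of_int c / of_int d"
    using assms unfolding in_Zp_def by blast
  have "\<not> int p dvd b * d" using h assms(1)
    by (simp add: prime_dvd_mult_iff prime_nat_int_transfer)
  moreover have "x * y = of_int (a*c) / of_int (b*d)"
    using h by (simp add: field_simps)
  ultimately show ?thesis unfolding in_Zp_def by blast
qed

lemma Zp_neg: "in_Zp p x \<Longrightarrow> in_Zp p (- x)"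
  unfolding in_Zp_def by (metis minus_divide_left of_int_minus)

lemma Zp_inv: "\<not> int p dvd b \<Longrightarrow> in_Zp p (1 / of_int b)"
  unfolding in_Zp_def by (rule exI[of _ 1], rule exI[of _ b]) auto

lemma Zp_sum:
  assumes "prime p" "\<And>i. i \<in> S \<Longrightarrow> in_Zp p (f i)" shows "in_Zp p (\<Sum>i\<in>S. f i)"
  using assms(2)
proof (induction S rule: infinite_finite_induct)
  case (infinite A) then show ?case using Zp_int[of p 0] assms by simp
next
  case empty then show ?case using Zp_int[of p 0] assms by simp
next
  case (insert x F) then show ?case using Zp_add[OF assms(1)] by simp
qed

definition pdv :: "nat \<Rightarrow> rat \<Rightarrow> bool" where
  "pdv p x \<longleftrightarrow> in_Zp p (x / of_nat p)"

lemma pdv_add: "prime p \<Longrightarrow> pdv p x \<Longrightarrow> pdv p y \<Longrightarrow> pdv p (x + y)"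
  unfolding pdv_def using Zp_add by (simp add: add_divide_distrib)

lemma pdv_neg: "pdv p x \<Longrightarrow> pdv p (- x)"
  unfolding pdv_def using Zp_neg by fastforce

lemma pdv_diff: "prime p \<Longrightarrow> pdv p x \<Longrightarrow> pdv p y \<Longrightarrow> pdv p (x - y)"
  using pdv_add[of p x "-y"] pdv_neg by simp

lemma pdv_mult: "prime p \<Longrightarrow> pdv p x \<Longrightarrow> in_Zp p y \<Longrightarrow> pdv p (x * y)"
  unfolding pdv_def using Zp_mult[of p "x / of_nat p" y] by (simp add: mult.commute mult.left_commute)

lemma pdv_sum:
  assumes "prime p" "\<And>i. i \<in> S \<Longrightarrow> pdv p (f i)" shows "pdv p (\<Sum>i\<in>S. f i)"
  using assms(2)
proof (induction S rule: infinite_finite_induct)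
  case (infinite A) then show ?case using Zp_int[of p 0] assms by (simp add: pdv_def)
next
  case empty then show ?case using Zp_int[of p 0] assms by (simp add: pdv_def)
next
  case (insert x F) then show ?case using pdv_add[OF assms(1)] by simp
qed

lemma pdv_int: "prime p \<Longrightarrow> int p dvd a \<Longrightarrow> pdv p (of_int a)"
  unfolding pdv_def
proof -
  assume "prime p" "int p dvd a"
  then obtain c where "a = int p * c" by auto
  then have "of_int a / of_nat p = (of_int c :: rat)" using `prime p`
    by (simp add: prime_gt_0_nat)
  then show "in_Zp p (of_int a / of_nat p)" using Zp_int `prime p` by simp
qed

lemma pdv_inv_diff:
  fixes A B :: nat
  assumes "prime p" "[A = B] (mod p)" "\<not> p dvd A"
  shows "pdv p (1 / of_nat A - 1 / of_nat B)"
proof -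
  have nB: "\<not> p dvd B" using assms cong_dvd_iff by blast
  have "A \<noteq> 0" "B \<noteq> 0" using assms nB by (metis dvd_0_right)+
  have eq: "1 / of_nat A - 1 / of_nat B = (of_int (int B - int A) :: rat) * (1 / of_int (int A * int B))"
    using `A \<noteq> 0` `B \<noteq> 0` by (simp add: field_simps)
  moreover have "int p dvd int B - int A"
    using assms(2) by (metis cong_int_iff cong_iff_dvd_diff cong_sym)
  moreover have "\<not> int p dvd int A * int B" using assms nB
    by (metis int_dvd_int_iff of_nat_mult prime_dvd_mult_iff)
  ultimately have "pdv p ((of_int (int B - int A) :: rat) * (1 / of_int (int A * int B)))"
    using pdv_mult[OF assms(1) pdv_int[OF assms(1)] Zp_inv] by blast
  then show ?thesis using eq by simp
qed

lemma cong_ZpI: "in_Zp p x \<Longrightarrow> in_Zp p y \<Longrightarrow> pdv p (x - y) \<Longrightarrow> cong_Zp p x y"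
  unfolding cong_Zp_def pdv_def by simp



lemma choose_pp_dvd:
  assumes "prime p" "0 < x" "x < p ^ e"
  shows "p dvd (p ^ e choose x)"
proof (rule ccontr)
  assume nd: "\<not> p dvd (p ^ e choose x)"
  have "x * (p ^ e choose x) = p ^ e * ((p ^ e - 1) choose (x - 1))"
    using times_binomial_minus1_eq[OF assms(2)] by simp
  then have "p ^ e dvd x * (p ^ e choose x)" by simp
  moreover have "coprime (p ^ e) (p ^ e choose x)"
    using nd assms(1) by (simp add: prime_imp_coprime)
  ultimately have "p ^ e dvd x" using coprime_dvd_mult_left_iff by blast
  then show False using assms(2,3) by (simp add: nat_dvd_not_less)
qed

lemma choose_pp_cong:
  assumes "prime p"
  shows "[p ^ e choose x = (if x = 0 \<or> x = p ^ e then 1 else 0)] (mod p)"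
proof -
  consider "x = 0" | "x = p ^ e" | "0 < x \<and> x < p ^ e" | "x > p ^ e" by linarith
  then show ?thesis
  proof cases
    case 3
    then show ?thesis using choose_pp_dvd[OF assms, of x e]
      by (auto simp: cong_0_iff)
  qed (auto simp: binomial_eq_0)
qed

lemma choose_lucas:
  assumes "prime p"
  shows "[(a * p ^ e) choose b = (if p ^ e dvd b then a choose (b div p ^ e) else 0)] (mod p)"
proof (induction a arbitrary: b)
  case 0
  show ?case
  proof (cases b)
    case (Suc m)
    have "p ^ e dvd b \<Longrightarrow> 0 < b div p ^ e" using Suc assms
      by (metis dvd_div_eq_0_iff gr0I nat.distinct(1))
    then show ?thesis using Suc by (auto simp: binomial_eq_0)
  qed simp
next
  case (Suc a)
  define q where "q = p ^ e"
  have q0: "q > 0" using assms q_def by (simp add: prime_gt_0_nat)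
  define g where "g x = (if q dvd x then a choose (x div q) else 0)" for x
  have IH: "[(a * q) choose x = g x] (mod p)" for x using Suc.IH unfolding q_def g_def by simp
  define dl where "dl x = (if x = 0 \<or> x = q then 1 else (0::nat))" for x
  have "(Suc a * q) choose b = (\<Sum>i\<le>b. ((a*q) choose i) * (q choose (b - i)))"
    using vandermonde[of "a*q" q b] by (simp add: add.commute)
  also have "[\<dots> = (\<Sum>i\<le>b. ((a*q) choose i) * dl (b - i))] (mod p)"
    apply (rule cong_sum, rule cong_mult, rule cong_refl)
    unfolding dl_def q_def by (rule choose_pp_cong[OF assms])
  also have "(\<Sum>i\<le>b. ((a*q) choose i) * dl (b - i))
      = (\<Sum>i\<le>b. ((a*q) choose i) * (if i = b then 1 else 0))
        + (\<Sum>i\<le>b. ((a*q) choose i) * (if q \<le> b \<and> i = b - q then 1 else 0))"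
    unfolding sum.distrib[symmetric]
    apply (rule sum.cong, simp)
    using q0 by (auto simp: dl_def)
  also have "\<dots> = ((a*q) choose b) + (if q \<le> b then (a*q) choose (b - q) else 0)"
    by (simp add: if_distrib cong: if_cong) 
  also have "[\<dots> = g b + (if q \<le> b then g (b - q) else 0)] (mod p)"
    using IH by (auto intro: cong_add)
  also have "g b + (if q \<le> b then g (b - q) else 0) = (if q dvd b then Suc a choose (b div q) else 0)"
  proof (cases "q dvd b")
    case True
    then obtain c where c: "b = q * c" by auto
    show ?thesis
    proof (cases c)
      case 0 then show ?thesis using c q0 by (simp add: g_def)
    next
      case (Suc c')
      have "b - q = q * c'" using c Suc by (simp add: algebra_simps)
      moreover have "q \<le> b" using c Suc q0 by simp
      ultimately show ?thesis using c Suc q0 by (simp add: g_def)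
    qed
  next
    case False
    then have "\<not> q dvd (b - q)" if "q \<le> b" using that
      by (metis dvd_diff_nat dvd_refl le_add_diff_inverse2 dvd_add)
    then show ?thesis using False by (simp add: g_def)
  qed
  finally show ?case unfolding q_def .
qed



definition mn :: "nat set \<Rightarrow> (nat \<Rightarrow> nat) \<Rightarrow> nat" where
  "mn S j = fact (\<Sum>i\<in>S. j i) div (\<Prod>i\<in>S. fact (j i))"

lemma mn_facts:
  assumes "finite S"
  shows "fact (\<Sum>i\<in>S. j i) = mn S j * (\<Prod>i\<in>S. fact (j i))
    \<and> (\<forall>a. a \<notin> S \<longrightarrow> mn (insert a S) j = ((j a + (\<Sum>i\<in>S. j i)) choose j a) * mn S j)"
  using assms
proof (induction S rule: finite_induct)
  case empty
  then show ?case by (simp add: mn_def)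
next
  case (insert x F)
  have key: "fact (j a + (\<Sum>i\<in>F'. j i)) = ((j a + (\<Sum>i\<in>F'. j i)) choose j a) * mn F' j * (\<Prod>i\<in>insert a F'. fact (j i))"
    if "finite F'" "a \<notin> F'" "fact (\<Sum>i\<in>F'. j i) = mn F' j * (\<Prod>i\<in>F'. fact (j i))" for a F'
  proof -
    have "fact (j a + (\<Sum>i\<in>F'. j i)) = fact (j a) * fact (\<Sum>i\<in>F'. j i) * ((j a + (\<Sum>i\<in>F'. j i)) choose j a)"
      using binomial_fact_lemma[of "j a" "j a + (\<Sum>i\<in>F'. j i)"] by simp
    then show ?thesis using that by simp
  qed
  have ins: "mn (insert a F') j = ((j a + (\<Sum>i\<in>F'. j i)) choose j a) * mn F' j"
    if "finite F'" "a \<notin> F'" "fact (\<Sum>i\<in>F'. j i) = mn F' j * (\<Prod>i\<in>F'. fact (j i))" for a F'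
  proof -
    have pos: "(\<Prod>i\<in>insert a F'. fact (j i)) > (0::nat)" by (simp add: prod_pos)
    have "mn (insert a F') j = fact (j a + (\<Sum>i\<in>F'. j i)) div (\<Prod>i\<in>insert a F'. fact (j i))"
      unfolding mn_def using that by simp
    also have "\<dots> = ((j a + (\<Sum>i\<in>F'. j i)) choose j a) * mn F' j"
      using key[OF that] pos by simp
    finally show ?thesis .
  qed
  have "fact (\<Sum>i\<in>insert x F. j i) = mn (insert x F) j * (\<Prod>i\<in>insert x F. fact (j i))"
    using key[of F x] ins[of F x] insert by simp
  moreover have "\<forall>a. a \<notin> insert x F \<longrightarrow> mn (insert a (insert x F)) j = ((j a + (\<Sum>i\<in>insert x F. j i)) choose j a) * mn (insert x F) j"
    using ins[of "insert x F"] calculation insert.hyps by simp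
  ultimately show ?case by blast
qed

lemma mn_insert: "finite S \<Longrightarrow> a \<notin> S \<Longrightarrow> mn (insert a S) j = ((j a + (\<Sum>i\<in>S. j i)) choose j a) * mn S j"
  using mn_facts by blast

lemma mn_rat:
  assumes "finite S"
  shows "(fact (\<Sum>i\<in>S. j i) :: rat) / (\<Prod>i\<in>S. fact (j i)) = of_nat (mn S j)"
proof -
  have "(fact (\<Sum>i\<in>S. j i) :: rat) = of_nat (fact (\<Sum>i\<in>S. j i))" by simp
  also have "\<dots> = of_nat (mn S j) * of_nat (\<Prod>i\<in>S. fact (j i))"
    using mn_facts[OF assms, of j] by (metis of_nat_mult)
  also have "\<dots> = of_nat (mn S j) * (\<Prod>i\<in>S. fact (j i))" by simp
  finally have e: "(fact (\<Sum>i\<in>S. j i) :: rat) = of_nat (mn S j) * (\<Prod>i\<in>S. fact (j i))" .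
  have nz: "(\<Prod>i\<in>S. (fact (j i)::rat)) \<noteq> 0" using assms by simp
  show ?thesis unfolding e using nz by simp
qed

lemma sum_div_common:
  fixes q :: nat
  assumes "\<forall>i\<in>S. q dvd j i"
  shows "(\<Sum>i\<in>S. j i) = q * (\<Sum>i\<in>S. j i div q)"
  using assms by (simp add: sum_distrib_left)

lemma mn_lucas:
  assumes "prime p" "finite S"
  shows "(\<Sum>i\<in>S. j i) = s * p ^ e \<Longrightarrow>
    ((\<forall>i\<in>S. p ^ e dvd j i) \<longrightarrow> [mn S j = mn S (\<lambda>i. j i div p ^ e)] (mod p))
    \<and> ((\<not> (\<forall>i\<in>S. p ^ e dvd j i)) \<longrightarrow> p dvd mn S j)"
  using assms(2)
proof (induction S arbitrary: s rule: finite_induct)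
  case empty
  then show ?case by (simp add: mn_def)
next
  case (insert a F)
  define q where "q = p ^ e"
  have q0: "q > 0" using assms q_def by (simp add: prime_gt_0_nat)
  have sum: "j a + (\<Sum>i\<in>F. j i) = s * q" using insert q_def by simp
  have mi: "mn (insert a F) j = ((s * q) choose j a) * mn F j"
    using mn_insert[OF insert.hyps] sum by simp
  have L: "[(s * q) choose j a = (if q dvd j a then s choose (j a div q) else 0)] (mod p)"
    unfolding q_def by (rule choose_lucas[OF assms(1)])
  show ?case
  proof (cases "q dvd j a")
    case False
    then have "p dvd ((s * q) choose j a)" using L by (simp add: cong_0_iff)
    then show ?thesis using mi False q_def by simp
  next
    case True
    then obtain c where c: "j a = q * c" by auto
    have "(\<Sum>i\<in>F. j i) = (s - c) * q" using sum c by (simp add: algebra_simps)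
    note IH = insert.IH[OF this[unfolded q_def]]
    show ?thesis
    proof (intro conjI impI)
      assume nall: "\<not> (\<forall>i\<in>insert a F. p ^ e dvd j i)"
      then have "\<not> (\<forall>i\<in>F. p ^ e dvd j i)" using True q_def by simp
      then show "p dvd mn (insert a F) j" using IH mi by simp
    next
      assume all: "\<forall>i\<in>insert a F. p ^ e dvd j i"
      then have allF: "\<forall>i\<in>F. q dvd j i" using q_def by simp
      have sF: "(\<Sum>i\<in>F. j i div q) = s - c"
        using sum_div_common[OF allF] \<open>(\<Sum>i\<in>F. j i) = (s - c) * q\<close> q0 by simp
      have "q * c \<le> q * s" using sum c by (metis le_add1 mult.commute)
      then have cs: "c \<le> s" using q0 by simp
      have "mn (insert a F) (\<lambda>i. j i div q) = (s choose c) * mn F (\<lambda>i. j i div q)"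
        using mn_insert[OF insert.hyps, of "\<lambda>i. j i div q"] sF c q0 cs by simp
      moreover have "[mn (insert a F) j = (s choose c) * mn F j] (mod p)"
        using mi L True c q0 by (simp add: cong_mult)
      moreover have "[mn F j = mn F (\<lambda>i. j i div q)] (mod p)" using IH allF q_def by simp
      ultimately have "[mn (insert a F) j = mn (insert a F) (\<lambda>i. j i div q)] (mod p)"
        using cong_trans cong_mult[OF cong_refl[of "s choose c"]] by metis
      then show "[mn (insert a F) j = mn (insert a F) (\<lambda>i. j i div p ^ e)] (mod p)"
        unfolding q_def .
    qed
  qed
qed



lemma Stirling_sum: "Stirling (Suc N) (Suc k) = (\<Sum>i\<le>N. (N choose i) * Stirling i k)"
proof (induction N arbitrary: k)
  case 0
  then show ?case by (cases k) auto
next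
  case (Suc N)
  have "(\<Sum>i\<le>Suc N. (Suc N choose i) * Stirling i k)
      = (\<Sum>i\<le>Suc N. (N choose i) * Stirling i k) + (\<Sum>i\<le>Suc N. (if i = 0 then 0 else (N choose (i - 1)) * Stirling i k))"
    apply (subst sum.distrib[symmetric], rule sum.cong, simp)
    subgoal for x by (cases x) (auto simp: algebra_simps)
    done
  also have "(\<Sum>i\<le>Suc N. (N choose i) * Stirling i k) = (\<Sum>i\<le>N. (N choose i) * Stirling i k)"
    by simp
  also have "(\<Sum>i\<le>Suc N. (if i = 0 then 0 else (N choose (i - 1)) * Stirling i k))
      = (\<Sum>i\<le>N. (N choose i) * Stirling (Suc i) k)"
    by (subst sum.atMost_Suc_shift) simp
  also have "\<dots> = k * Stirling (Suc N) (Suc k) + Stirling (Suc N) k"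
  proof (cases k)
    case 0 then show ?thesis by simp
  next
    case (Suc k')
    have "(\<Sum>i\<le>N. (N choose i) * Stirling (Suc i) k)
        = k * (\<Sum>i\<le>N. (N choose i) * Stirling i k) + (\<Sum>i\<le>N. (N choose i) * Stirling i k')"
      using Suc by (simp add: sum_distrib_left sum.distrib algebra_simps)
    then show ?thesis using Suc.IH[of k] Suc.IH[of k'] Suc by (simp del: Stirling.simps)
  qed
  finally have calc: "(\<Sum>i\<le>Suc N. (Suc N choose i) * Stirling i k) = (\<Sum>i\<le>N. (N choose i) * Stirling i k) + (k * Stirling (Suc N) (Suc k) + Stirling (Suc N) k)" .
  have e4: "Stirling (Suc (Suc N)) (Suc k) = Suc k * Stirling (Suc N) (Suc k) + Stirling (Suc N) k"
    by (rule Stirling.simps(4))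
  show ?case unfolding e4 calc using Suc.IH[of k] by (simp del: Stirling.simps add: algebra_simps)
qed



definition AA :: "nat \<Rightarrow> nat \<Rightarrow> nat \<Rightarrow> (nat \<Rightarrow> nat) set" where
  "AA r N k = {j. (\<forall>m. m \<notin> {1..r} \<longrightarrow> j m = 0) \<and> (\<Sum>m=1..r. j m) = k \<and> (\<Sum>m=1..r. m * j m) = N}"

definition WW :: "nat \<Rightarrow> (nat \<Rightarrow> nat) \<Rightarrow> rat" where
  "WW r j = 1 / (\<Prod>m=1..r. fact (j m) * fact m ^ j m)"

definition FF :: "nat \<Rightarrow> nat \<Rightarrow> nat \<Rightarrow> rat" where
  "FF r N k = (\<Sum>j\<in>AA r N k. WW r j)"

lemma rs_FF: "restricted_stirling r N k = fact N * FF r N k"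
  unfolding restricted_stirling_def FF_def WW_def AA_def sum_distrib_left by simp

lemma AA_finite: "finite (AA r N k)"
proof -
  have "AA r N k \<subseteq> {f. \<forall>x. (x \<in> {1..r} \<longrightarrow> f x \<in> {0..k}) \<and> (x \<notin> {1..r} \<longrightarrow> f x = 0)}"
  proof
    fix j assume "j \<in> AA r N k"
    then have h: "\<forall>m. m \<notin> {1..r} \<longrightarrow> j m = 0" "(\<Sum>m=1..r. j m) = k" unfolding AA_def by auto
    have "j x \<le> k" if "x \<in> {1..r}" for x
      using member_le_sum[of x "{1..r}" j] that h(2) by simp
    then show "j \<in> {f. \<forall>x. (x \<in> {1..r} \<longrightarrow> f x \<in> {0..k}) \<and> (x \<notin> {1..r} \<longrightarrow> f x = 0)}"
      using h by auto
  qed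
  moreover have "finite {f. \<forall>x. (x \<in> {1..r} \<longrightarrow> f x \<in> {0..k}) \<and> (x \<notin> {1..r} \<longrightarrow> f x = (0::nat))}"
    by (rule finite_set_of_finite_funs) auto
  ultimately show ?thesis using finite_subset by blast
qed

definition addm :: "nat \<Rightarrow> (nat \<Rightarrow> nat) \<Rightarrow> nat \<Rightarrow> nat" where
  "addm m j = (\<lambda>i. j i + (if i = m then 1 else 0))"

lemma upd_sum:
  fixes c :: "nat \<Rightarrow> nat"
  assumes "m \<in> {1..r}"
  shows "(\<Sum>i=1..r. c i * addm m j i) = (\<Sum>i=1..r. c i * j i) + c m"
proof -
  have "(\<Sum>i=1..r. c i * addm m j i) = (\<Sum>i=1..r. c i * j i + (if i = m then c i else 0))"
    by (rule sum.cong) (auto simp: addm_def)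
  also have "\<dots> = (\<Sum>i=1..r. c i * j i) + c m"
    using assms by (simp add: sum.distrib)
  finally show ?thesis .
qed

lemma upd_prod:
  fixes g :: "nat \<Rightarrow> nat \<Rightarrow> rat"
  assumes "m \<in> {1..r}"
  shows "(\<Prod>i=1..r. g i (addm m j i)) * g m (j m) = (\<Prod>i=1..r. g i (j i)) * g m (j m + 1)"
proof -
  have "(\<Prod>i=1..r. g i (addm m j i)) = g m (j m + 1) * (\<Prod>i\<in>{1..r} - {m}. g i (addm m j i))"
    using assms by (subst prod.remove[of _ m]) (auto simp: addm_def)
  also have "(\<Prod>i\<in>{1..r} - {m}. g i (addm m j i)) = (\<Prod>i\<in>{1..r} - {m}. g i (j i))"
    by (rule prod.cong) (auto simp: addm_def)
  finally have a: "(\<Prod>i=1..r. g i (addm m j i)) = g m (j m + 1) * (\<Prod>i\<in>{1..r} - {m}. g i (j i))" .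
  have b: "(\<Prod>i=1..r. g i (j i)) = g m (j m) * (\<Prod>i\<in>{1..r} - {m}. g i (j i))"
    using assms by (subst prod.remove[of _ m]) auto
  show ?thesis unfolding a b by (simp add: algebra_simps)
qed

lemma WW_addm:
  assumes "m \<in> {1..r}"
  shows "WW r (addm m j) * (of_nat (j m + 1) * fact m) = WW r j"
proof -
  define g where "g i x = (fact x * fact i ^ x :: rat)" for i x
  have "(\<Prod>i=1..r. g i (addm m j i)) * g m (j m) = (\<Prod>i=1..r. g i (j i)) * g m (j m + 1)"
    by (rule upd_prod[OF assms])
  moreover have "g m (j m + 1) = g m (j m) * (of_nat (j m + 1) * fact m)"
    unfolding g_def by (simp add: algebra_simps)
  moreover have "g m (j m) \<noteq> 0" unfolding g_def by simp
  ultimately have "(\<Prod>i=1..r. g i (addm m j i)) * g m (j m) = ((\<Prod>i=1..r. g i (j i)) * (of_nat (j m + 1) * fact m)) * g m (j m)"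
    by (simp add: algebra_simps)
  then have "(\<Prod>i=1..r. g i (addm m j i)) = (\<Prod>i=1..r. g i (j i)) * (of_nat (j m + 1) * fact m)"
    using \<open>g m (j m) \<noteq> 0\<close> by (rule mult_right_cancel[THEN iffD1, rotated])
  moreover have "(\<Prod>i=1..r. g i (j i)) \<noteq> 0" unfolding g_def by simp
  moreover have "(of_nat (j m + 1) * fact m :: rat) \<noteq> 0" by simp
  moreover have aux: "\<And>X Y c :: rat. X = Y * c \<Longrightarrow> Y \<noteq> 0 \<Longrightarrow> c \<noteq> 0 \<Longrightarrow> 1 / X * c = 1 / Y"
    by simp
  ultimately have "1 / (\<Prod>i=1..r. g i (addm m j i)) * (of_nat (j m + 1) * fact m) = 1 / (\<Prod>i=1..r. g i (j i))"
    by blast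
  then show ?thesis unfolding WW_def g_def .
qed

lemma FF_term:
  assumes m: "m \<in> {1..r}" "m \<le> Suc N"
  shows "FF r (Suc N - m) k / fact (m - 1) = (\<Sum>j\<in>AA r (Suc N) (Suc k). of_nat (m * j m) * WW r j)"
proof -
  define B where "B = {j \<in> AA r (Suc N) (Suc k). j m \<ge> 1}"
  define subm where "subm j = (\<lambda>i. j i - (if i = m then 1 else 0))" for j :: "nat \<Rightarrow> nat"
  have fm: "(fact m :: rat) = of_nat m * fact (m - 1)" using m by (intro fact_reduce) auto
  have "FF r (Suc N - m) k / fact (m - 1) = (\<Sum>j\<in>AA r (Suc N - m) k. WW r j / fact (m - 1))"
    unfolding FF_def by (simp add: sum_divide_distrib)
  also have "\<dots> = (\<Sum>j\<in>B. of_nat (m * j m) * WW r j)"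
  proof (rule sum.reindex_bij_witness[of _ subm "addm m"])
    fix j assume "j \<in> AA r (Suc N - m) k"
    then show "subm (addm m j) = j" unfolding subm_def addm_def by auto
  next
    fix j assume j: "j \<in> AA r (Suc N - m) k"
    have "(\<Sum>i=1..r. 1 * addm m j i) = (\<Sum>i=1..r. 1 * j i) + 1" using upd_sum[OF m(1)] by presburger
    moreover have "(\<Sum>i=1..r. i * addm m j i) = (\<Sum>i=1..r. i * j i) + m" using upd_sum[OF m(1)] by presburger
    ultimately show "addm m j \<in> B" using j m unfolding AA_def B_def by (auto simp: addm_def)
  next
    fix j assume "j \<in> B"
    then show "addm m (subm j) = j" unfolding subm_def addm_def B_def by auto
  next
    fix j assume j: "j \<in> B"
    then have e: "addm m (subm j) = j" unfolding subm_def addm_def B_def by auto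
    have "(\<Sum>i=1..r. 1 * addm m (subm j) i) = (\<Sum>i=1..r. 1 * subm j i) + 1" using upd_sum[OF m(1)] by presburger
    moreover have "(\<Sum>i=1..r. i * addm m (subm j) i) = (\<Sum>i=1..r. i * subm j i) + m" using upd_sum[OF m(1)] by presburger
    ultimately show "subm j \<in> AA r (Suc N - m) k" using j m e unfolding AA_def B_def by (auto simp: subm_def)
  next
    fix j assume "j \<in> AA r (Suc N - m) k"
    have "WW r (addm m j) * (of_nat (j m + 1) * fact m) = WW r j" by (rule WW_addm[OF m(1)])
    then show "of_nat (m * addm m j m) * WW r (addm m j) = WW r j / fact (m - 1)"
      unfolding fm by (simp add: addm_def field_simps)
  qed
  also have "\<dots> = (\<Sum>j\<in>AA r (Suc N) (Suc k). of_nat (m * j m) * WW r j)"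
    by (rule sum.mono_neutral_left) (auto simp: B_def AA_finite)
  finally show ?thesis .
qed

lemma FF_rec:
  "of_nat (Suc N) * FF r (Suc N) (Suc k) = (\<Sum>m\<in>{1..r} \<inter> {..Suc N}. FF r (Suc N - m) k / fact (m - 1))"
proof -
  have "(\<Sum>m\<in>{1..r} \<inter> {..Suc N}. FF r (Suc N - m) k / fact (m - 1))
      = (\<Sum>m\<in>{1..r} \<inter> {..Suc N}. \<Sum>j\<in>AA r (Suc N) (Suc k). of_nat (m * j m) * WW r j)"
    apply (rule sum.cong, rule refl)
    subgoal for m by (rule FF_term) auto
    done
  also have "\<dots> = (\<Sum>j\<in>AA r (Suc N) (Suc k). of_nat (\<Sum>m\<in>{1..r} \<inter> {..Suc N}. m * j m) * WW r j)"
    by (subst sum.swap) (simp add: sum_distrib_right)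
  also have "\<dots> = (\<Sum>j\<in>AA r (Suc N) (Suc k). of_nat (Suc N) * WW r j)"
  proof (rule sum.cong, simp)
    fix j assume j: "j \<in> AA r (Suc N) (Suc k)"
    then have s: "(\<Sum>m=1..r. m * j m) = Suc N" unfolding AA_def by auto
    have "(\<Sum>m\<in>{1..r} \<inter> {..Suc N}. m * j m) = (\<Sum>m=1..r. m * j m)"
    proof (rule sum.mono_neutral_left, simp, blast)
      show "\<forall>i\<in>{1..r} - {1..r} \<inter> {..Suc N}. i * j i = 0"
      proof
        fix i assume i: "i \<in> {1..r} - {1..r} \<inter> {..Suc N}"
        have "i * j i \<le> Suc N" using member_le_sum[of i "{1..r}" "\<lambda>m. m * j m"] i s by auto
        show "i * j i = 0"
        proof (rule ccontr)
          assume "i * j i \<noteq> 0"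
          then have "i \<le> i * j i" by simp
          moreover have "i > Suc N" using i by auto
          ultimately show False using \<open>i * j i \<le> Suc N\<close> by linarith
        qed
      qed
    qed
    then show "of_nat (\<Sum>m\<in>{1..r} \<inter> {..Suc N}. m * j m) * WW r j = of_nat (Suc N) * WW r j"
      using s by simp
  qed
  finally show ?thesis unfolding FF_def by (simp add: sum_distrib_left)
qed



lemma AA_0: "AA r 0 s = (if s = 0 then {\<lambda>_. 0} else {})"
proof -
  have "j = (\<lambda>_. 0)" if "j \<in> AA r 0 s" for j
  proof
    fix m
    from that have h: "\<forall>m. m \<notin> {1..r} \<longrightarrow> j m = 0" "(\<Sum>m=1..r. m * j m) = 0" unfolding AA_def by auto
    show "j m = 0"
    proof (cases "m \<in> {1..r}")
      case True
      then have "m * j m = 0" using h(2) by simp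
      then show ?thesis using True by simp
    qed (use h in auto)
  qed
  then show ?thesis unfolding AA_def by auto
qed

lemma AA_Suc_0: "AA r (Suc N) 0 = {}"
proof -
  have False if "j \<in> AA r (Suc N) 0" for j
  proof -
    from that have h: "(\<Sum>m=1..r. j m) = 0" "(\<Sum>m=1..r. m * j m) = Suc N" unfolding AA_def by auto
    then have "\<forall>m\<in>{1..r}. j m = 0" by simp
    then have "(\<Sum>m=1..r. m * j m) = 0" by simp
    then show False using h by simp
  qed
  then show ?thesis by blast
qed

lemma FF_stirling: "T \<le> r \<Longrightarrow> fact T * FF r T s = of_nat (Stirling T s)"
proof (induction T arbitrary: s rule: less_induct)
  case (less T)
  show ?case
  proof (cases T)
  case 0
  then show ?thesis by (cases s) (auto simp: FF_def AA_0 WW_def)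
next
  case (Suc N)
  note TN = Suc
  show ?thesis
  proof (cases s)
    case 0
    then show ?thesis using TN by (simp add: FF_def AA_Suc_0)
  next
    case (Suc k)
    have I: "{1..r} \<inter> {..Suc N} = {1..Suc N}" using less.prems TN by auto
    have "fact T * FF r T s = fact N * (of_nat (Suc N) * FF r (Suc N) (Suc k))"
      using Suc TN by (simp add: algebra_simps)
    also have "\<dots> = fact N * (\<Sum>m\<in>{1..Suc N}. FF r (Suc N - m) k / fact (m - 1))"
      unfolding FF_rec I ..
    also have "\<dots> = (\<Sum>m\<in>{1..Suc N}. of_nat (N choose (m - 1)) * (fact (Suc N - m) * FF r (Suc N - m) k))"
      unfolding sum_distrib_left
    proof (rule sum.cong, simp)
      fix m assume m: "m \<in> {1..Suc N}"
      have "(of_nat (N choose (m - 1)) :: rat) = fact N / (fact (m - 1) * fact (N - (m - 1)))"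
        using m by (intro binomial_fact) auto
      moreover have "N - (m - 1) = Suc N - m" using m by auto
      ultimately show "fact N * (FF r (Suc N - m) k / fact (m - 1)) =
          of_nat (N choose (m - 1)) * (fact (Suc N - m) * FF r (Suc N - m) k)"
        by (simp add: field_simps)
    qed
    also have "\<dots> = (\<Sum>m\<in>{1..Suc N}. of_nat ((N choose (m - 1)) * Stirling (Suc N - m) k))"
      by (rule sum.cong, simp) (use less.IH less.prems TN in auto)
    also have "\<dots> = (\<Sum>i\<le>N. of_nat ((N choose i) * Stirling i k))"
    proof (rule sum.reindex_bij_witness[of _ "\<lambda>i. Suc N - i" "\<lambda>m. Suc N - m"])
      fix a :: nat assume a: "a \<in> {1..Suc N}"
      then have "N choose (a - 1) = N choose (Suc N - a)"
      proof -
        have "a - 1 \<le> N" "N - (a - 1) = Suc N - a" using a by auto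
        then show ?thesis using binomial_symmetric[of "a - 1" N] by simp
      qed
      then show "(of_nat ((N choose (Suc N - a)) * Stirling (Suc N - a) k) :: rat) = of_nat ((N choose (a - 1)) * Stirling (Suc N - a) k)"
        by simp
    qed auto
    also have "\<dots> = of_nat (Stirling T s)"
      unfolding Suc TN Stirling_sum by simp
    finally show ?thesis .
  qed
qed
qed



lemma pow_p_cong: "prime p \<Longrightarrow> [x ^ p = x] (mod p)" for x :: nat
proof (cases "p dvd x")
  case True
  assume "prime p"
  then have "p dvd x ^ p" using True by (metis dvd_power dvd_trans prime_gt_0_nat)
  then show ?thesis using True by (simp add: cong_def dvd_eq_mod_eq_0)
next
  case False
  assume p: "prime p"
  have "[x ^ (p - 1) = 1] (mod p)" by (rule fermat_theorem[OF p False])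
  then have "[x * x ^ (p - 1) = x * 1] (mod p)" by (rule cong_mult[OF cong_refl])
  moreover have "x * x ^ (p - 1) = x ^ p" using p
    by (metis power_Suc prime_gt_0_nat Suc_diff_1)
  ultimately show ?thesis by simp
qed

lemma fermat_pow: "prime p \<Longrightarrow> [x ^ (p ^ e) = x] (mod p)" for x :: nat
proof (induction e)
  case 0 then show ?case by simp
next
  case (Suc e)
  have "x ^ (p ^ Suc e) = (x ^ (p ^ e)) ^ p" by (metis power_Suc power_mult mult.commute)
  also have "[\<dots> = x ^ (p ^ e)] (mod p)" by (rule pow_p_cong[OF Suc.prems])
  also have "[x ^ (p ^ e) = x] (mod p)" by (rule Suc.IH[OF Suc.prems])
  finally show ?case .
qed

lemma P_nd:
  assumes "prime p"
  shows "\<not> p dvd (\<Prod>m=1..p-1. fact m ^ j m :: nat)"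
proof
  assume "p dvd (\<Prod>m=1..p-1. fact m ^ j m :: nat)"
  then obtain m where m: "m \<in> {1..p-1}" "p dvd (fact m ^ j m :: nat)"
    using prime_dvd_prod_iff[of "{1..p-1}" p] assms by auto
  then have "p dvd (fact m :: nat)" using assms prime_dvd_power by blast
  then have "p \<le> m" using prime_dvd_fact_iff[OF assms] by blast
  then show False using m(1) assms prime_gt_0_nat by auto
qed

lemma term_eq:
  assumes "(\<Sum>m=1..R. j m) = k"
  shows "fact k * WW R j = of_nat (mn {1..R} j) * (1 / of_nat (\<Prod>m=1..R. fact m ^ j m))"
proof -
  have "WW R j = 1 / ((\<Prod>m=1..R. fact (j m)) * (\<Prod>m=1..R. fact m ^ j m))"
    unfolding WW_def by (simp add: prod.distrib)
  then have "fact k * WW R j = (fact (\<Sum>m=1..R. j m) / (\<Prod>m=1..R. fact (j m))) * (1 / (\<Prod>m=1..R. fact m ^ j m))"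
    using assms by simp
  also have "\<dots> = of_nat (mn {1..R} j) * (1 / (\<Prod>m=1..R. fact m ^ j m))"
    using mn_rat[of "{1..R}" j] by simp
  finally show ?thesis by simp
qed

lemma V_cong:
  assumes "prime p"
  shows "pdv p (1 / of_nat (\<Prod>m=1..p-1. fact m ^ (p ^ e * i m) :: nat) - 1 / of_nat (\<Prod>m=1..p-1. fact m ^ i m :: nat))"
proof -
  define P where "P = (\<Prod>m=1..p-1. fact m ^ i m :: nat)"
  have A: "(\<Prod>m=1..p-1. fact m ^ (p ^ e * i m) :: nat) = P ^ (p ^ e)"
  proof -
    have "(\<Prod>m=1..p-1. fact m ^ (p ^ e * i m) :: nat) = (\<Prod>m=1..p-1. (fact m ^ i m) ^ (p ^ e))"
      by (rule prod.cong, simp) (metis power_mult mult.commute)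
    then show ?thesis unfolding P_def by (simp add: prod_power_distrib)
  qed
  have nP: "\<not> p dvd P" unfolding P_def by (rule P_nd[OF assms])
  have "\<not> p dvd P ^ (p ^ e)" using nP assms prime_dvd_power by blast
  moreover have "[P ^ (p ^ e) = P] (mod p)" by (rule fermat_pow[OF assms])
  ultimately show ?thesis unfolding A P_def[symmetric] using pdv_inv_diff[OF assms] by blast
qed



theorem lemma3p14:
  fixes p n s t :: nat
  assumes "prime p" and "odd p" and "n \<ge> 2"
    and "1 \<le> s" and "s \<le> p - 1"
    and "s * p ^ (n - 2) \<le> t" and "t \<le> p ^ (n - 1) - 1"
  shows "in_Zp p (fact (s * p ^ (n - 2)) / fact t * restricted_stirling (p - 1) t (s * p ^ (n - 2)))
    \<and> (\<not> p ^ (n - 2) dvd t \<longrightarrow>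
         cong_Zp p (fact (s * p ^ (n - 2)) / fact t * restricted_stirling (p - 1) t (s * p ^ (n - 2))) 0)
    \<and> (p ^ (n - 2) dvd t \<longrightarrow>
         cong_Zp p (fact (s * p ^ (n - 2)) / fact t * restricted_stirling (p - 1) t (s * p ^ (n - 2)))
           (fact s / fact (t div p ^ (n - 2)) * of_nat (Stirling (t div p ^ (n - 2)) s)))"
proof -
  note p = assms(1)
  define e where "e = n - 2"
  define q where "q = p ^ e"
  define R where "R = p - 1"
  define k where "k = s * q"
  define X where "X = fact (s * p ^ (n - 2)) / fact t * restricted_stirling (p - 1) t (s * p ^ (n - 2))"
  define Y where "Y = (fact s / fact (t div p ^ (n - 2)) * of_nat (Stirling (t div p ^ (n - 2)) s) :: rat)"
  define V :: "(nat \<Rightarrow> nat) \<Rightarrow> rat" where "V j = 1 / of_nat (\<Prod>m=1..R. fact m ^ j m :: nat)" for j :: "nat \<Rightarrow> nat"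
  define tm :: "(nat \<Rightarrow> nat) \<Rightarrow> rat" where "tm j = of_nat (mn {1..R} j) * V j" for j
  have q0: "q > 0" unfolding q_def using p by (simp add: prime_gt_0_nat)
  have Vz: "in_Zp p (V j)" for j
  proof -
    have "\<not> int p dvd int (\<Prod>m=1..R. fact m ^ j m :: nat)"
      using P_nd[OF p, of j] unfolding R_def by presburger
    then show ?thesis unfolding V_def using Zp_inv[of p] by (metis of_int_of_nat_eq)
  qed
  have natZ: "in_Zp p (of_nat a)" for a using Zp_int[OF p, of "int a"] by simp
  have tmz: "in_Zp p (tm j)" for j unfolding tm_def using Zp_mult[OF p natZ Vz] .
  have tm_eq: "fact (\<Sum>m=1..R. j m) * WW R j = tm j" for j
    unfolding tm_def V_def using term_eq[where R=R and j=j and k="\<Sum>m=1..R. j m"] by simp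
  have X_eq: "X = (\<Sum>j\<in>AA R t k. tm j)"
  proof -
    have "X = fact k / fact t * restricted_stirling R t k"
      unfolding X_def k_def q_def e_def R_def ..
    also have "\<dots> = fact k * FF R t k" unfolding rs_FF by simp
    also have "\<dots> = (\<Sum>j\<in>AA R t k. fact k * WW R j)" unfolding FF_def sum_distrib_left ..
    also have "\<dots> = (\<Sum>j\<in>AA R t k. tm j)"
      by (rule sum.cong, simp) (metis (mono_tags, lifting) AA_def mem_Collect_eq tm_eq)
    finally show ?thesis .
  qed
  define G where "G = {j\<in>AA R t k. \<forall>m\<in>{1..R}. q dvd j m}"
  have GA: "G \<subseteq> AA R t k" unfolding G_def by auto
  have split: "X = (\<Sum>j\<in>AA R t k - G. tm j) + (\<Sum>j\<in>G. tm j)"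
    unfolding X_eq using sum.subset_diff[OF GA AA_finite] .
  have Bdp: "pdv p (\<Sum>j\<in>AA R t k - G. tm j)"
  proof (rule pdv_sum[OF p])
    fix j assume j: "j \<in> AA R t k - G"
    then have "(\<Sum>m\<in>{1..R}. j m) = s * p ^ e" unfolding AA_def k_def q_def by auto
    moreover have "\<not> (\<forall>m\<in>{1..R}. p ^ e dvd j m)" using j unfolding G_def q_def by auto
    ultimately have "p dvd mn {1..R} j" using mn_lucas[OF p, of "{1..R}" j s e] by auto
    then have "int p dvd int (mn {1..R} j)" by simp
    then have "pdv p (of_int (int (mn {1..R} j)))" by (rule pdv_int[OF p])
    then show "pdv p (tm j)" unfolding tm_def using pdv_mult[OF p _ Vz] by simp
  qed
  have XZ: "in_Zp p X" unfolding X_eq by (rule Zp_sum[OF p tmz])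
  have part2: "cong_Zp p X 0" if nd: "\<not> q dvd t"
  proof -
    have "G = {}"
    proof (rule ccontr)
      assume "G \<noteq> {}"
      then obtain j where j: "j \<in> G" by auto
      then have "t = (\<Sum>m=1..R. m * j m)" "\<forall>m\<in>{1..R}. q dvd j m" unfolding G_def AA_def by auto
      then have "q dvd t" by (metis (no_types, lifting) dvd_sum dvd_mult)
      then show False using nd by simp
    qed
    then have "X = (\<Sum>j\<in>AA R t k - G. tm j)" using split by simp
    then show ?thesis using XZ Zp_int[OF p, of 0] Bdp by (intro cong_ZpI) simp_all
  qed
  have part3: "cong_Zp p X Y" if dv: "q dvd t"
  proof -
    define T where "T = t div q"
    have tq: "t = q * T" using dv unfolding T_def by simp
    have "n - 1 = Suc e" using assms(3) unfolding e_def by simp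
    then have pq: "p ^ (n - 1) = q * p" unfolding q_def by simp
    have pos: "p * q > 0" using q0 p prime_gt_0_nat by simp
    have "t \<le> p * q - 1" using assms(7) pq by (simp add: mult.commute)
    then have "t < p * q" using pos by linarith
    then have "T < p" unfolding T_def by (rule less_mult_imp_div_less)
    then have TR: "T \<le> R" unfolding R_def by simp
    define mq where "mq i = (\<lambda>m. q * i m)" for i :: "nat \<Rightarrow> nat"
    have inj: "inj_on mq (AA R T s)"
      by (rule inj_onI) (use q0 in \<open>auto simp: mq_def fun_eq_iff\<close>)
    have Gim: "G = mq ` AA R T s"
    proof
      show "G \<subseteq> mq ` AA R T s"
      proof
        fix j assume j: "j \<in> G"
        define i where "i = (\<lambda>m. j m div q)"
        have dj: "\<forall>m\<in>{1..R}. q dvd j m" and supp: "\<forall>m. m \<notin> {1..R} \<longrightarrow> j m = 0"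
          and s1: "(\<Sum>m=1..R. j m) = k" and s2: "(\<Sum>m=1..R. m * j m) = t"
          using j unfolding G_def AA_def by auto
        have ji: "j = mq i" unfolding mq_def i_def fun_eq_iff
        proof
          fix m show "j m = q * (j m div q)"
          proof (cases "m \<in> {1..R}")
            case True then show ?thesis using dj by simp
          next
            case False then show ?thesis using supp by simp
          qed
        qed
        have "(\<Sum>m=1..R. j m) = q * (\<Sum>m=1..R. i m)" unfolding ji mq_def by (simp add: sum_distrib_left)
        then have "(\<Sum>m=1..R. i m) = s" using s1 q0 unfolding k_def by (simp add: mult.commute)
        moreover have "(\<Sum>m=1..R. m * j m) = q * (\<Sum>m=1..R. m * i m)" unfolding ji mq_def
          by (simp add: sum_distrib_left algebra_simps)
        then have "(\<Sum>m=1..R. m * i m) = T" using s2 q0 tq by simp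
        moreover have "\<forall>m. m \<notin> {1..R} \<longrightarrow> i m = 0" using supp unfolding i_def by simp
        ultimately have "i \<in> AA R T s" unfolding AA_def by auto
        then show "j \<in> mq ` AA R T s" using ji by blast
      qed
    next
      show "mq ` AA R T s \<subseteq> G"
      proof
        fix j assume "j \<in> mq ` AA R T s"
        then obtain i where i: "i \<in> AA R T s" "j = mq i" by auto
        then have supp: "\<forall>m. m \<notin> {1..R} \<longrightarrow> i m = 0"
          and s1: "(\<Sum>m=1..R. i m) = s" and s2: "(\<Sum>m=1..R. m * i m) = T"
          unfolding AA_def by auto
        have "(\<Sum>m=1..R. j m) = k" unfolding i(2) mq_def k_def using s1
          by (simp add: sum_distrib_left[symmetric] mult.commute)
        moreover have "(\<Sum>m=1..R. m * j m) = t"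
        proof -
          have "(\<Sum>m=1..R. m * j m) = (\<Sum>m=1..R. q * (m * i m))"
            unfolding i(2) mq_def by (rule sum.cong) (simp_all add: algebra_simps)
          also have "\<dots> = q * T" using s2 by (simp add: sum_distrib_left[symmetric])
          finally show ?thesis using tq by simp
        qed
        ultimately show "j \<in> G" unfolding G_def AA_def using supp i(2) by (auto simp: mq_def)
      qed
    qed
    have Gsum: "(\<Sum>j\<in>G. tm j) = (\<Sum>i\<in>AA R T s. tm (mq i))"
      unfolding Gim by (rule sum.reindex[OF inj, unfolded comp_def])
    have Y_eq: "Y = (\<Sum>i\<in>AA R T s. tm i)"
    proof -
      have "Y = fact s / fact T * of_nat (Stirling T s)"
        unfolding Y_def T_def q_def e_def ..
      also have "\<dots> = fact s / fact T * (fact T * FF R T s)" using FF_stirling[OF TR] by simp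
      also have "\<dots> = fact s * FF R T s" by simp
      also have "\<dots> = (\<Sum>i\<in>AA R T s. tm i)" unfolding FF_def sum_distrib_left
        by (rule sum.cong, simp) (metis (mono_tags, lifting) AA_def mem_Collect_eq tm_eq)
      finally show ?thesis .
    qed
    have dif: "pdv p (tm (mq i) - tm i)" if i: "i \<in> AA R T s" for i
    proof -
      have "(\<Sum>m\<in>{1..R}. q * i m) = q * s" using i unfolding AA_def
        by (simp add: sum_distrib_left[symmetric])
      then have s1: "(\<Sum>m\<in>{1..R}. mq i m) = s * p ^ e" unfolding mq_def q_def by (simp add: mult.commute)
      have "(\<lambda>m. mq i m div p ^ e) = i" unfolding mq_def q_def using q0 q_def by auto
      then have c: "[mn {1..R} (mq i) = mn {1..R} i] (mod p)"
        using mn_lucas[OF p, of "{1..R}" "mq i" s e] s1 unfolding mq_def q_def by auto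
      have "int p dvd int (mn {1..R} (mq i)) - int (mn {1..R} i)"
        using c by (simp add: cong_int_iff[symmetric] cong_iff_dvd_diff)
      then have a1: "pdv p ((of_nat (mn {1..R} (mq i)) - of_nat (mn {1..R} i)) * V (mq i))"
        using pdv_mult[OF p pdv_int[OF p] Vz] by (metis of_int_diff of_int_of_nat_eq)
      have "pdv p (V (mq i) - V i)" unfolding V_def mq_def q_def R_def by (rule V_cong[OF p])
      then have a2: "pdv p ((V (mq i) - V i) * of_nat (mn {1..R} i))"
        using pdv_mult[OF p _ natZ] by blast
      have "tm (mq i) - tm i = (of_nat (mn {1..R} (mq i)) - of_nat (mn {1..R} i)) * V (mq i)
          + (V (mq i) - V i) * of_nat (mn {1..R} i)"
        unfolding tm_def by (simp add: algebra_simps)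
      then show ?thesis using pdv_add[OF p a1 a2] by simp
    qed
    have "X - Y = (\<Sum>j\<in>AA R t k - G. tm j) + (\<Sum>i\<in>AA R T s. tm (mq i) - tm i)"
      unfolding split Gsum Y_eq sum_subtractf by simp
    then have "pdv p (X - Y)" using pdv_add[OF p Bdp pdv_sum[OF p dif]] by simp
    moreover have "in_Zp p Y" unfolding Y_eq by (rule Zp_sum[OF p tmz])
    ultimately show ?thesis using XZ by (intro cong_ZpI)
  qed
  show ?thesis
    using XZ part2 part3 unfolding X_def Y_def q_def e_def by blast
qed

end
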